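(* Let $A,B\in\mathcal M_n$ be accretive with $W(A),W(B)\subset S_\alpha$ for some $0\le\alpha<\pi/2$, let $\Phi:\mathcal M_n\to\mathcal M_r$ be a positive linear map with $\Phi(\mathcal I)$ positive definite (so that $\Phi(A),\Phi(B)$ are accretive), and let $f\in\mathfrak m$. Then $$\Re\,\Phi(A\sigma_fB)\le\sec^2(\alpha)\,\Re\big(\Phi(A)\,\sigma_f\,\Phi(B)\big).$$
   Context: A matrix $A$ is accretive if $\Re A=\frac{A+A^*}{2}$ is positive definite. $W(A)$ is the numerical range, $S_\alpha=\{z:\Re z>0,\ |\Im z|\le\tan(\alpha)\Re z\}$. $\le$ is the Löwner order. A linear map $\Phi$ is positive if it maps positive semidefinite matrices to positive semidefinite matrices. $\mathfrak m$ is the set of matrix monotone $f:(0,\infty)\to(0,\infty)$ with $f(1)=1$; each has a unique probability measure $\nu_f$ on $[0,1]$ with $f(x)=\int_0^1((1-t)+tx^{-1})^{-1}d\nu_f(t)$, $x>0$. For accretive $A,B$: $A!_tB=((1-t)A^{-1}+tB^{-1})^{-1}$ and $A\sigma_fB:=\int_0^1A!_tB\,d\nu_f(t)$. *)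

theory Defs
  imports "HOL-Analysis.Analysis" "HOL-Probability.Probability"
begin

type_synonym 'n cmat = "complex^'n^'n"

definition cadj :: "complex^'n^'m \<Rightarrow> complex^'m^'n" where
  "cadj A = (\<chi> i j. cnj (A $ j $ i))"

definition cscale :: "complex \<Rightarrow> complex^'n^'m \<Rightarrow> complex^'n^'m" where
  "cscale c A = (\<chi> i j. c * A $ i $ j)"

definition qform :: "'n::finite cmat \<Rightarrow> complex^'n \<Rightarrow> complex" where
  "qform A x = (\<Sum>i\<in>UNIV. cnj (x $ i) * (A *v x) $ i)"

definition cnorm2 :: "complex^'n \<Rightarrow> real" where
  "cnorm2 x = (\<Sum>i\<in>UNIV. (cmod (x $ i))^2)"

definition ReM :: "'n::finite cmat \<Rightarrow> 'n cmat" where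
  "ReM A = (1/2::real) *\<^sub>R (A + cadj A)"

definition hermitian :: "'n::finite cmat \<Rightarrow> bool" where
  "hermitian A \<longleftrightarrow> cadj A = A"

definition psd :: "'n::finite cmat \<Rightarrow> bool" where
  "psd A \<longleftrightarrow> hermitian A \<and> (\<forall>x. Re (qform A x) \<ge> 0)"

definition posdef :: "'n::finite cmat \<Rightarrow> bool" where
  "posdef A \<longleftrightarrow> hermitian A \<and> (\<forall>x. x \<noteq> 0 \<longrightarrow> Re (qform A x) > 0)"

definition loewner_le :: "'n::finite cmat \<Rightarrow> 'n cmat \<Rightarrow> bool" where
  "loewner_le A B \<longleftrightarrow> psd (B - A)"

definition accretive :: "'n::finite cmat \<Rightarrow> bool" where
  "accretive A \<longleftrightarrow> posdef (ReM A)"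

definition numrange :: "'n::finite cmat \<Rightarrow> complex set" where
  "numrange A = {qform A x | x. cnorm2 x = 1}"

definition sector :: "real \<Rightarrow> complex set" where
  "sector \<alpha> = {z. Re z > 0 \<and> \<bar>Im z\<bar> \<le> tan \<alpha> * Re z}"

definition positive_linear_map :: "('n::finite cmat \<Rightarrow> 'r::finite cmat) \<Rightarrow> bool" where
  "positive_linear_map \<Phi> \<longleftrightarrow>
     (\<forall>A B. \<Phi> (A + B) = \<Phi> A + \<Phi> B) \<and>
     (\<forall>c A. \<Phi> (cscale c A) = cscale c (\<Phi> A)) \<and>
     (\<forall>A. psd A \<longrightarrow> psd (\<Phi> A))"

definition hmean :: "'n::finite cmat \<Rightarrow> real \<Rightarrow> 'n cmat \<Rightarrow> 'n cmat" where
  "hmean A t B = matrix_inv ((1 - t) *\<^sub>R matrix_inv A + t *\<^sub>R matrix_inv B)"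

text \<open>A sigma_f B = integral over [0,1] of A !_t B d nu_f(t) (Bochner integral).\<close>
definition opmean :: "real measure \<Rightarrow> 'n::finite cmat \<Rightarrow> 'n cmat \<Rightarrow> 'n cmat" where
  "opmean \<nu> A B = (\<integral>t. hmean A t B \<partial>\<nu>)"

definition represents :: "real measure \<Rightarrow> (real \<Rightarrow> real) \<Rightarrow> bool" where
  "represents \<nu> f \<longleftrightarrow> prob_space \<nu> \<and> sets \<nu> = sets (restrict_space borel {0..1}) \<and>
     (\<forall>x>0. f x = (\<integral>t. inverse ((1 - t) + t * inverse x) \<partial>\<nu>))"

end

theory Submission
  imports Defs
begin

definition ip :: "complex^'n::finite \<Rightarrow> complex^'n \<Rightarrow> complex" where
  "ip x y = (\<Sum>i\<in>UNIV. cnj (x $ i) * y $ i)"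

lemma qform_ip: "qform A x = ip x (A *v x)"
  by (simp add: qform_def ip_def)

lemma ip_add_right: "ip x (y + z) = ip x y + ip x z"
  by (simp add: ip_def distrib_left sum.distrib)
lemma ip_add_left: "ip (x + y) z = ip x z + ip y z"
  by (simp add: ip_def distrib_right sum.distrib)
lemma ip_diff_right: "ip x (y - z) = ip x y - ip x z"
  by (simp add: ip_def right_diff_distrib sum_subtractf)
lemma ip_diff_left: "ip (x - y) z = ip x z - ip y z"
  by (simp add: ip_def left_diff_distrib sum_subtractf)
lemma ip_minus_right: "ip x (- y) = - ip x y"
  by (simp add: ip_def sum_negf)
lemma ip_minus_left: "ip (- x) y = - ip x y"
  by (simp add: ip_def sum_negf)
lemma ip_scale_right: "ip x (c *s y) = c * ip x y"
  by (simp add: ip_def sum_distrib_left mult_ac)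
lemma ip_scale_left: "ip (c *s x) y = cnj c * ip x y"
  by (simp add: ip_def sum_distrib_left mult_ac)
lemma ip_scaleR_right: "ip x (r *\<^sub>R y) = of_real r * ip x y"
  unfolding ip_def by (simp add: sum_distrib_left) (simp add: scaleR_conv_of_real mult_ac)
lemma ip_scaleR_left: "ip (r *\<^sub>R x) y = of_real r * ip x y"
  unfolding ip_def by (simp add: sum_distrib_left) (simp add: scaleR_conv_of_real mult_ac)
lemma ip_zero_right[simp]: "ip x 0 = 0" by (simp add: ip_def)
lemma ip_zero_left[simp]: "ip 0 x = 0" by (simp add: ip_def)
lemma ip_sum_right: "ip x (sum f S) = (\<Sum>s\<in>S. ip x (f s))"
  by (induction S rule: infinite_finite_induct) (auto simp: ip_add_right)
lemma ip_sum_left: "ip (sum f S) x = (\<Sum>s\<in>S. ip (f s) x)"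
  by (induction S rule: infinite_finite_induct) (auto simp: ip_add_left)
lemma ip_cnj: "cnj (ip x y) = ip y x"
  by (simp add: ip_def mult_ac)
lemma Re_ip: "Re (ip x y) = inner x y"
  by (simp add: ip_def inner_vec_def inner_complex_def Re_sum)
lemma norm_vec_sq: "(norm (x::complex^'n::finite))^2 = (\<Sum>i\<in>UNIV. (cmod (x$i))^2)"
  unfolding norm_vec_def L2_set_def by (simp add: real_sqrt_pow2 sum_nonneg)
lemma ip_self: "ip x x = of_real ((norm x)^2)"
proof -
  have "ip x x = (\<Sum>i\<in>UNIV. of_real ((cmod (x$i))^2))"
    unfolding ip_def by (intro sum.cong refl) (metis complex_norm_square mult.commute)
  also have "\<dots> = of_real ((norm x)^2)"
    by (simp add: norm_vec_sq)
  finally show ?thesis .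
qed
lemma cnorm2_norm: "cnorm2 x = (norm x)^2"
  by (simp add: cnorm2_def norm_vec_sq)
lemma Re_ip_self: "Re (ip x x) = (norm x)^2"
  by (simp add: ip_self)
lemma Im_ip_self: "Im (ip x x) = 0"
  by (simp add: ip_self)

lemma cadj_nth: "cadj A $ i $ j = cnj (A $ j $ i)"
  by (simp add: cadj_def)
lemma ip_mat: "ip x (A *v y) = ip (cadj A *v x) y"
  unfolding ip_def matrix_vector_mult_def cadj_def
  apply (simp add: sum_distrib_left sum_distrib_right cnj_sum)
  apply (subst sum.swap)
  apply (simp add: mult_ac)
  done

lemma cadj_cadj[simp]: "cadj (cadj A) = A"
  by (simp add: cadj_def vec_eq_iff)
lemma cadj_add: "cadj (A + B) = cadj A + cadj B"
  by (simp add: cadj_def vec_eq_iff)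
lemma cadj_diff: "cadj (A - B) = cadj A - cadj B"
  by (simp add: cadj_def vec_eq_iff)
lemma cadj_minus: "cadj (- A) = - cadj A"
  by (simp add: cadj_def vec_eq_iff)
lemma cadj_zero[simp]: "cadj 0 = 0"
  by (simp add: cadj_def vec_eq_iff)
lemma cadj_scaleR: "cadj (r *\<^sub>R A) = r *\<^sub>R cadj A"
  by (simp add: cadj_def vec_eq_iff)
lemma cadj_cscale: "cadj (cscale c A) = cscale (cnj c) (cadj A)"
  by (simp add: cadj_def cscale_def vec_eq_iff)
lemma cadj_mat[simp]: "cadj (mat 1 :: 'n::finite cmat) = mat 1"
  by (simp add: cadj_def mat_def vec_eq_iff)
lemma cadj_mult: "cadj (A ** B) = cadj B ** (cadj A :: complex^_^_)"
  by (simp add: cadj_def matrix_matrix_mult_def vec_eq_iff cnj_sum mult_ac)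

lemma mv_add: "(A + B) *v x = A *v x + B *v (x::complex^'n)"
  by (simp add: matrix_vector_mult_def vec_eq_iff distrib_right sum.distrib)
lemma mv_diff: "(A - B) *v x = A *v x - B *v (x::complex^'n)"
  by (simp add: matrix_vector_mult_def vec_eq_iff left_diff_distrib sum_subtractf)
lemma mv_scaleR: "(r *\<^sub>R A) *v x = r *\<^sub>R (A *v (x::complex^'n))"
  by (simp add: matrix_vector_mult_def vec_eq_iff scaleR_sum_right)
lemma mv_cscale: "(cscale c A) *v x = c *s (A *v (x::complex^'n))"
  by (simp add: matrix_vector_mult_def vec_eq_iff cscale_def sum_distrib_left mult_ac)
lemma mv_add_right: "A *v (x + y) = A *v x + A *v (y::complex^'n)"
  by (simp add: matrix_vector_mult_def vec_eq_iff distrib_left sum.distrib)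
lemma mv_diff_right: "A *v (x - y) = A *v x - A *v (y::complex^'n)"
  by (simp add: matrix_vector_mult_def vec_eq_iff right_diff_distrib sum_subtractf)
lemma mv_minus_right: "A *v (- y) = - (A *v (y::complex^'n))"
  by (simp add: matrix_vector_mult_def vec_eq_iff sum_negf)
lemma mv_scale_right: "A *v (c *s y) = c *s (A *v (y::complex^'n))"
  by (simp add: matrix_vector_mult_def vec_eq_iff sum_distrib_left mult_ac)
lemma mv_scaleR_right: "A *v (r *\<^sub>R y) = r *\<^sub>R (A *v (y::complex^'n))"
  unfolding matrix_vector_mult_def by (simp add: vec_eq_iff scaleR_sum_right)
lemma mv_zero_right[simp]: "A *v (0::complex^'n) = 0"
  by (simp add: matrix_vector_mult_def vec_eq_iff)
lemma mv_zero[simp]: "(0::complex^'n^'m) *v x = 0"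
  by (simp add: matrix_vector_mult_def vec_eq_iff)
lemma mv_sum: "(sum F S) *v (x::complex^'n) = (\<Sum>s\<in>S. F s *v x)"
  by (induction S rule: infinite_finite_induct) (auto simp: mv_add)
lemma mv_sum_right: "A *v (sum f S) = (\<Sum>s\<in>S. A *v (f s::complex^'n))"
  by (induction S rule: infinite_finite_induct) (auto simp: mv_add_right)

lemma qform_add: "qform (A + B) x = qform A x + qform B x"
  by (simp add: qform_ip mv_add ip_add_right)
lemma qform_diff: "qform (A - B) x = qform A x - qform B x"
  by (simp add: qform_ip mv_diff ip_diff_right)
lemma qform_scaleR: "qform (r *\<^sub>R A) x = of_real r * qform A x"
  by (simp add: qform_ip mv_scaleR ip_scaleR_right)
lemma qform_cscale: "qform (cscale c A) x = c * qform A x"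
  by (simp add: qform_ip mv_cscale ip_scale_right)
lemma qform_cadj: "qform (cadj A) x = cnj (qform A x)"
  by (simp add: qform_ip ip_mat ip_cnj)
lemma qform_mat1: "qform (mat 1) x = of_real ((norm x)^2)"
  by (simp add: qform_ip ip_self)
lemma qform_sum: "qform (sum F S) x = (\<Sum>s\<in>S. qform (F s) x)"
  by (simp add: qform_ip mv_sum ip_sum_right)

lemma qform_ReM: "qform (ReM A) x = of_real (Re (qform A x))"
proof -
  have "qform (ReM A) x = of_real (1/2) * (qform A x + cnj (qform A x))"
    by (simp add: ReM_def qform_scaleR qform_add qform_cadj)
  then show ?thesis by (simp add: complex_add_cnj)
qed
lemma Re_qform_ReM: "Re (qform (ReM A) x) = Re (qform A x)"
  by (simp add: qform_ReM)

lemma hermitian_ReM: "hermitian (ReM A)"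
  by (simp add: hermitian_def ReM_def cadj_scaleR cadj_add add.commute)

lemma hermitian_ip: "hermitian A \<Longrightarrow> ip x (A *v y) = ip (A *v x) y"
  by (simp add: hermitian_def ip_mat)
lemma hermitian_ip_cnj: "hermitian A \<Longrightarrow> ip x (A *v y) = cnj (ip y (A *v x))"
  by (simp add: hermitian_ip ip_cnj)
lemma hermitian_qform_real: assumes "hermitian A" shows "qform A x = of_real (Re (qform A x))"
proof -
  have h: "cnj (qform A x) = qform A x" using qform_cadj[of A x] assms by (simp add: hermitian_def)
  have "Im (qform A x) = 0" using arg_cong[OF h, of Im] by simp
  then show ?thesis by (simp add: complex_eq_iff)
qed

lemma hermitian_add: "hermitian A \<Longrightarrow> hermitian B \<Longrightarrow> hermitian (A + B)"
  by (simp add: hermitian_def cadj_add)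
lemma hermitian_diff: "hermitian A \<Longrightarrow> hermitian B \<Longrightarrow> hermitian (A - B)"
  by (simp add: hermitian_def cadj_diff)
lemma hermitian_scaleR: "hermitian A \<Longrightarrow> hermitian (r *\<^sub>R A)"
  by (simp add: hermitian_def cadj_scaleR)
lemma hermitian_mat1: "hermitian (mat 1 :: 'n::finite cmat)"
  by (simp add: hermitian_def)
lemma hermitian_sum: "(\<And>s. s \<in> S \<Longrightarrow> hermitian (F s)) \<Longrightarrow> hermitian (sum F S)"
  by (induction S rule: infinite_finite_induct) (auto simp: hermitian_def cadj_add)

lemma inv_both: assumes "invertible (A::'a::field^'n^'n)"
  shows "A ** matrix_inv A = mat 1 \<and> matrix_inv A ** A = mat 1"
  using assms unfolding invertible_def matrix_inv_def by (rule someI_ex)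
lemma inv_left: "invertible (A::'a::field^'n^'n) \<Longrightarrow> matrix_inv A ** A = mat 1"
  using inv_both by blast
lemma inv_right: "invertible (A::'a::field^'n^'n) \<Longrightarrow> A ** matrix_inv A = mat 1"
  using inv_both by blast
lemma inv_unique: assumes "B ** A = mat (1::'a::field)" shows "matrix_inv (A::'a^'n^'n) = B"
proof -
  have inv: "invertible A" using assms invertible_left_inverse by blast
  have "matrix_inv A = matrix_inv A ** (A ** B)"
    using assms matrix_left_right_inverse by (metis matrix_mul_rid)
  also have "\<dots> = B" by (simp add: matrix_mul_assoc inv_left[OF inv])
  finally show ?thesis .
qed
lemma invertible_ker: assumes "\<And>x. (A::'a::field^'n^'n) *v x = 0 \<Longrightarrow> x = 0" shows "invertible A"
  using assms matrix_left_invertible_ker invertible_left_inverse by blast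
lemma inv_mv_left: "invertible (A::complex^'n^'n) \<Longrightarrow> matrix_inv A *v (A *v x) = x"
  by (simp add: matrix_vector_mul_assoc inv_left)
lemma inv_mv_right: "invertible (A::complex^'n^'n) \<Longrightarrow> A *v (matrix_inv A *v x) = x"
  by (simp add: matrix_vector_mul_assoc inv_right)
lemma invertible_inv: "invertible (A::'a::field^'n^'n) \<Longrightarrow> invertible (matrix_inv A)"
  using inv_both invertible_def by blast
lemma inv_inv: "invertible (A::'a::field^'n^'n) \<Longrightarrow> matrix_inv (matrix_inv A) = A"
  using inv_right inv_unique by blast
lemma cadj_inv: assumes "invertible (A::complex^'n^'n)"
  shows "matrix_inv (cadj A) = cadj (matrix_inv A)"
  by (rule inv_unique) (simp add: cadj_mult[symmetric] inv_right[OF assms])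
lemma hermitian_inv: "hermitian A \<Longrightarrow> invertible A \<Longrightarrow> hermitian (matrix_inv A)"
  by (metis cadj_inv hermitian_def)

lemma accretive_Re: "accretive A \<Longrightarrow> x \<noteq> 0 \<Longrightarrow> Re (qform A x) > 0"
  by (metis Re_qform_ReM accretive_def posdef_def)
lemma accretiveI: "(\<And>x. x \<noteq> 0 \<Longrightarrow> Re (qform A x) > 0) \<Longrightarrow> accretive A"
  by (simp add: accretive_def posdef_def hermitian_ReM Re_qform_ReM)
lemma accretive_invertible: assumes "accretive A" shows "invertible A"
proof (rule invertible_ker)
  fix x assume "A *v x = 0"
  then have "Re (qform A x) = 0" by (simp add: qform_ip)
  then show "x = 0" using accretive_Re[OF assms] by force
qed
lemma posdef_accretive: "posdef A \<Longrightarrow> accretive A"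
  by (simp add: posdef_def accretiveI)
lemma posdef_ReM: "posdef A \<Longrightarrow> ReM A = A"
  by (simp add: posdef_def hermitian_def ReM_def scaleR_2[symmetric] del: scaleR_2)

lemma accretive_inv: assumes "accretive (A::'n::finite cmat)" shows "accretive (matrix_inv A)"
proof (rule accretiveI)
  fix x :: "complex^'n" assume x: "x \<noteq> 0"
  have inv: "invertible A" using accretive_invertible[OF assms] .
  let ?y = "matrix_inv A *v x"
  have y: "?y \<noteq> 0" using x inv_mv_right[OF inv, of x] by auto
  have "qform (matrix_inv A) x = ip (A *v ?y) ?y"
    by (simp add: qform_ip inv_mv_right[OF inv])
  also have "\<dots> = cnj (qform A ?y)" by (simp add: qform_ip ip_cnj)
  finally show "Re (qform (matrix_inv A) x) > 0" using accretive_Re[OF assms y] by simp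
qed

lemma accretive_comb: assumes "accretive (A::'n::finite cmat)" "accretive B" "0 \<le> a" "0 \<le> b" "a + b > 0"
  shows "accretive (a *\<^sub>R A + b *\<^sub>R B)"
proof (rule accretiveI)
  fix x :: "complex^'n" assume x: "x \<noteq> 0"
  have 1: "Re (qform A x) > 0" "Re (qform B x) > 0" using accretive_Re assms x by auto
  have "Re (qform (a *\<^sub>R A + b *\<^sub>R B) x) = a * Re (qform A x) + b * Re (qform B x)"
    by (simp add: qform_add qform_scaleR)
  also have "\<dots> > 0"
  proof (cases "a > 0")
    case True then show ?thesis using 1 assms by (simp add: add_pos_nonneg)
  next
    case False then have "b > 0" using assms by auto
    then show ?thesis using 1 assms by (simp add: add_nonneg_pos)
  qed
  finally show "Re (qform (a *\<^sub>R A + b *\<^sub>R B) x) > 0" .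
qed

lemma accretive_hmean: assumes "accretive A" "accretive B" "0 \<le> t" "t \<le> 1"
  shows "accretive (hmean A t B)" "invertible ((1 - t) *\<^sub>R matrix_inv A + t *\<^sub>R matrix_inv B)"
proof -
  have "accretive ((1 - t) *\<^sub>R matrix_inv A + t *\<^sub>R matrix_inv B)"
    using accretive_comb[OF accretive_inv[OF assms(1)] accretive_inv[OF assms(2)]] assms by auto
  then show "accretive (hmean A t B)" "invertible ((1 - t) *\<^sub>R matrix_inv A + t *\<^sub>R matrix_inv B)"
    unfolding hmean_def using accretive_inv accretive_invertible by auto
qed

lemma qform_scaleR_vec: "qform A (r *\<^sub>R x) = of_real (r^2) * qform A x"
  by (simp add: qform_ip mv_scaleR_right ip_scaleR_right ip_scaleR_left power2_eq_square)

lemma cont_qform: "continuous_on S (\<lambda>x. Re (qform A x))"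
  unfolding qform_def matrix_vector_mult_def
  by (intro continuous_intros)

lemma qform_lower:
  fixes A :: "'n::finite cmat"
  shows "\<exists>m. (\<forall>x. m * (norm x)^2 \<le> Re (qform A x)) \<and> (posdef A \<longrightarrow> m > 0)"
proof -
  let ?f = "\<lambda>x. Re (qform A x)"
  have "axis (undefined::'n) (1::complex) \<noteq> 0" by (simp add: axis_eq_0_iff)
  then have "(inverse (norm (axis (undefined::'n) (1::complex)))) *\<^sub>R axis (undefined::'n) (1::complex) \<in> sphere 0 1"
    by simp
  then have ne: "sphere (0::complex^'n) 1 \<noteq> {}" by blast
  obtain x0 where x0: "x0 \<in> sphere 0 1" and min: "\<forall>y\<in>sphere 0 1. ?f x0 \<le> ?f y"
    using continuous_attains_inf[OF compact_sphere ne cont_qform] by blast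
  have "?f x0 * (norm x)^2 \<le> ?f x" for x
  proof (cases "x = 0")
    case True then show ?thesis by (simp add: qform_ip)
  next
    case False
    then have n: "norm x > 0" by simp
    have "(inverse (norm x)) *\<^sub>R x \<in> sphere 0 1" using n by simp
    then have "?f x0 \<le> ?f ((inverse (norm x)) *\<^sub>R x)" using min by blast
    also have "\<dots> = ?f x / (norm x)^2"
      using n by (simp add: qform_scaleR_vec field_simps)
    finally show ?thesis using n by (simp add: field_simps)
  qed
  moreover have "posdef A \<longrightarrow> ?f x0 > 0"
  proof
    assume "posdef A"
    moreover have "x0 \<noteq> 0" using x0 by auto
    ultimately show "?f x0 > 0" by (simp add: posdef_def)
  qed
  ultimately show ?thesis by blast
qed

lemma psd_shift: assumes "hermitian A" shows "\<exists>m. psd (A - m *\<^sub>R mat 1)"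
proof -
  obtain m where m: "\<forall>x. m * (norm x)^2 \<le> Re (qform A x)" using qform_lower by blast
  have "psd (A - m *\<^sub>R mat 1)"
    unfolding psd_def using m
    by (auto simp: hermitian_diff assms hermitian_scaleR hermitian_mat1 qform_diff qform_scaleR qform_mat1)
  then show ?thesis by blast
qed

lemma posdef_shift: assumes "posdef A" shows "\<exists>m>0. psd (A - m *\<^sub>R mat 1)"
proof -
  obtain m where m: "\<forall>x. m * (norm x)^2 \<le> Re (qform A x)" "m > 0" using qform_lower assms by blast
  have "psd (A - m *\<^sub>R mat 1)"
    unfolding psd_def using m assms
    by (auto simp: hermitian_diff posdef_def hermitian_scaleR hermitian_mat1 qform_diff qform_scaleR qform_mat1)
  then show ?thesis using m by blast
qed

lemma cscale_of_real: "cscale (of_real r) A = r *\<^sub>R A"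
  unfolding cscale_def vec_eq_iff by (simp add: scaleR_conv_of_real[where 'a=complex])

locale plm =
  fixes \<Phi> :: "'n::finite cmat \<Rightarrow> 'r::finite cmat"
  assumes plm: "positive_linear_map \<Phi>" and pd1: "posdef (\<Phi> (mat 1))"
begin

lemma add: "\<Phi> (A + B) = \<Phi> A + \<Phi> B" using plm positive_linear_map_def by blast
lemma cscale: "\<Phi> (cscale c A) = cscale c (\<Phi> A)" using plm positive_linear_map_def by blast
lemma psd: "psd A \<Longrightarrow> psd (\<Phi> A)" using plm positive_linear_map_def by blast
lemma scaleR: "\<Phi> (r *\<^sub>R A) = r *\<^sub>R \<Phi> A" using cscale[of "of_real r" A] by (simp add: cscale_of_real)
lemma zero: "\<Phi> 0 = 0" using scaleR[of 0 0] by simp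
lemma minus: "\<Phi> (- A) = - \<Phi> A" using scaleR[of "-1" A] by simp
lemma diff: "\<Phi> (A - B) = \<Phi> A - \<Phi> B" using add[of A "- B"] minus[of B] by simp
lemma sum: "\<Phi> (sum F S) = (\<Sum>s\<in>S. \<Phi> (F s))"
  by (induction S rule: infinite_finite_induct) (auto simp: zero add)

lemma hermitian: assumes "hermitian H" shows "hermitian (\<Phi> H)"
proof -
  obtain m where m: "psd (H - m *\<^sub>R mat 1)" using psd_shift[OF assms] by blast
  have "\<Phi> H = \<Phi> (H - m *\<^sub>R mat 1) + m *\<^sub>R \<Phi> (mat 1)" by (simp add: diff scaleR)
  moreover have "hermitian (\<Phi> (H - m *\<^sub>R mat 1))" using psd[OF m] psd_def by blast
  moreover have "hermitian (\<Phi> (mat 1))" using pd1 posdef_def by blast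
  ultimately show ?thesis by (simp add: hermitian_add hermitian_scaleR)
qed

lemma cadj: "\<Phi> (cadj X) = cadj (\<Phi> X)"
proof -
  define H1 where "H1 = ReM X"
  define H2 where "H2 = cscale (- \<i> / 2) (X - cadj X)"
  have h1: "hermitian H1" by (simp add: H1_def hermitian_ReM)
  have h2: "hermitian H2"
    by (simp add: H2_def hermitian_def cscale_def vec_eq_iff cadj_nth algebra_simps)
  have X: "X = H1 + cscale \<i> H2"
    by (simp add: H1_def H2_def ReM_def cscale_def vec_eq_iff cadj_nth field_simps)
  have Xa: "cadj X = H1 + cscale (- \<i>) H2"
    using h1 h2 by (simp add: X cadj_add cadj_cscale hermitian_def)
  have "\<Phi> (cadj X) = \<Phi> H1 + cscale (- \<i>) (\<Phi> H2)" by (simp add: Xa add cscale)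
  also have "\<dots> = cadj (\<Phi> H1 + cscale \<i> (\<Phi> H2))"
    using hermitian[OF h1] hermitian[OF h2] by (simp add: cadj_add cadj_cscale hermitian_def)
  also have "\<dots> = cadj (\<Phi> X)" by (simp add: X add cscale)
  finally show ?thesis .
qed

lemma ReM: "\<Phi> (ReM X) = ReM (\<Phi> X)"
  by (simp add: ReM_def scaleR add cadj)

lemma psd_form: "psd A \<Longrightarrow> Re (qform (\<Phi> A) x) \<ge> 0"
  using psd psd_def by blast

lemma mono_form: assumes "psd (B - A)" shows "Re (qform (\<Phi> A) x) \<le> Re (qform (\<Phi> B) x)"
  using psd_form[OF assms, of x] by (simp add: diff qform_diff)

lemma posdef: assumes "posdef P" shows "posdef (\<Phi> P)"
proof -
  obtain m where m: "m > 0" "psd (P - m *\<^sub>R mat 1)" using posdef_shift[OF assms] by blast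
  have e: "\<Phi> P = \<Phi> (P - m *\<^sub>R mat 1) + m *\<^sub>R \<Phi> (mat 1)" by (simp add: diff scaleR)
  have "hermitian (\<Phi> P)" using assms hermitian posdef_def by blast
  moreover have "Re (qform (\<Phi> P) x) > 0" if "x \<noteq> 0" for x
  proof -
    have "Re (qform (\<Phi> (P - m *\<^sub>R mat 1)) x) \<ge> 0" using psd_form[OF m(2)] .
    moreover have "Re (qform (\<Phi> (mat 1)) x) > 0" using pd1 that posdef_def by blast
    moreover have "m * Re (qform (\<Phi> (mat 1)) x) > 0" using m(1) calculation(2) by simp
    ultimately show ?thesis by (simp add: e qform_add qform_scaleR)
  qed
  ultimately show ?thesis by (simp add: posdef_def)
qed

lemma accretive: assumes "accretive A" shows "accretive (\<Phi> A)"
  using posdef[of "ReM A"] assms by (simp add: accretive_def ReM)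

end

lemma hm_split:
  assumes "accretive M" "accretive N" "0 < t" "t < 1"
  shows "\<exists>y z u. x = y + z \<and> M *v y = (1 - t) *\<^sub>R u \<and> N *v z = t *\<^sub>R u \<and> u = hmean M t N *v x"
proof -
  let ?X = "(1 - t) *\<^sub>R matrix_inv M + t *\<^sub>R matrix_inv N"
  have iX: "invertible ?X" using accretive_hmean(2)[OF assms(1,2)] assms by auto
  have iM: "invertible M" and iN: "invertible N" using assms accretive_invertible by auto
  define u where "u = hmean M t N *v x"
  define y where "y = (1 - t) *\<^sub>R (matrix_inv M *v u)"
  define z where "z = t *\<^sub>R (matrix_inv N *v u)"
  have "y + z = ?X *v u" by (simp add: y_def z_def mv_add mv_scaleR)
  also have "\<dots> = x" by (simp add: u_def hmean_def inv_mv_right[OF iX])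
  finally have "x = y + z" by simp
  moreover have "M *v y = (1 - t) *\<^sub>R u" by (simp add: y_def mv_scaleR_right inv_mv_right[OF iM])
  moreover have "N *v z = t *\<^sub>R u" by (simp add: z_def mv_scaleR_right inv_mv_right[OF iN])
  ultimately show ?thesis using u_def by blast
qed

lemma hm_value:
  assumes "x = y + z" "M *v y = (1 - t) *\<^sub>R u" "N *v z = t *\<^sub>R u" "u = W *v x" "0 < t" "t < 1"
  shows "Re (qform W x) = Re (qform M y) / (1 - t) + Re (qform N z) / t"
proof -
  have 1: "Re (qform M y) / (1 - t) = Re (ip y u)"
    using assms by (simp add: qform_ip ip_scaleR_right)
  have 2: "Re (qform N z) / t = Re (ip z u)"
    using assms by (simp add: qform_ip ip_scaleR_right)
  have "Re (qform W x) = Re (ip y u) + Re (ip z u)" using assms(1,4) by (simp add: qform_ip ip_add_left)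
  then show ?thesis using 1 2 by simp
qed

lemma herm_expand:
  assumes "hermitian P"
  shows "Re (qform P (a + d)) = Re (qform P a) + 2 * Re (ip d (P *v a)) + Re (qform P d)"
proof -
  have "qform P (a + d) = qform P a + ip a (P *v d) + ip d (P *v a) + qform P d"
    by (simp add: qform_ip mv_add_right ip_add_left ip_add_right)
  moreover have "ip a (P *v d) = cnj (ip d (P *v a))" using hermitian_ip_cnj[OF assms] .
  ultimately show ?thesis by simp
qed

lemma qform_minus_vec: "qform P (- d) = qform P d"
  by (simp add: qform_ip mv_minus_right ip_minus_left ip_minus_right)

lemma posdef_nonneg: "posdef P \<Longrightarrow> Re (qform P d) \<ge> 0"
  by (cases "d = 0") (auto simp: posdef_def qform_ip intro: less_imp_le)

lemma hm_lower:
  assumes P: "posdef P" and Q: "posdef Q" and t: "0 < t" "t < 1"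
  shows "Re (qform (hmean P t Q) (y + z)) \<le> Re (qform P y) / (1 - t) + Re (qform Q z) / t"
proof -
  have hP: "hermitian P" and hQ: "hermitian Q" using P Q posdef_def by auto
  obtain y0 z0 u where s: "y + z = y0 + z0" "P *v y0 = (1 - t) *\<^sub>R u" "Q *v z0 = t *\<^sub>R u"
      "u = hmean P t Q *v (y + z)"
    using hm_split[OF posdef_accretive[OF P] posdef_accretive[OF Q] t, of "y + z"] by blast
  have v: "Re (qform (hmean P t Q) (y + z)) = Re (qform P y0) / (1 - t) + Re (qform Q z0) / t"
    using hm_value[OF s(1) s(2) s(3) s(4) t] .
  define d where "d = y - y0"
  have y: "y = y0 + d" and z: "z = z0 + (- d)" using s(1) by (auto simp: d_def algebra_simps)
  have ey: "Re (qform P y) = Re (qform P y0) + 2 * ((1 - t) * Re (ip d u)) + Re (qform P d)"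
    using herm_expand[OF hP, of y0 d] s(2) by (simp add: y ip_scaleR_right)
  have ez: "Re (qform Q z) = Re (qform Q z0) - 2 * (t * Re (ip d u)) + Re (qform Q d)"
    using herm_expand[OF hQ, of z0 "- d"] s(3)
    by (simp add: z ip_scaleR_right ip_minus_left qform_minus_vec)
  have n1: "Re (qform P d) / (1 - t) \<ge> 0" using posdef_nonneg[OF P, of d] t by simp
  have n2: "Re (qform Q d) / t \<ge> 0" using posdef_nonneg[OF Q, of d] t by simp
  have a: "1 - t \<noteq> 0" "t \<noteq> 0" using t by auto
  have e1: "Re (qform P y) / (1 - t) = Re (qform P y0) / (1 - t) + 2 * Re (ip d u) + Re (qform P d) / (1 - t)"
    unfolding ey using a by (simp add: add_divide_distrib)
  have e2: "Re (qform Q z) / t = Re (qform Q z0) / t - 2 * Re (ip d u) + Re (qform Q d) / t"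
    unfolding ez using a by (simp add: add_divide_distrib diff_divide_distrib)
  have "Re (qform P y) / (1 - t) + Re (qform Q z) / t =
        Re (qform P y0) / (1 - t) + Re (qform Q z0) / t + Re (qform P d) / (1 - t) + Re (qform Q d) / t"
    unfolding e1 e2 by simp
  then show ?thesis using v n1 n2 by linarith
qed

lemma posdef_ReM_acc: "accretive A \<Longrightarrow> posdef (ReM A)"
  by (simp add: accretive_def)

lemma hm_ReM_le:
  assumes "accretive M" "accretive N" "0 < t" "t < 1"
  shows "Re (qform (hmean (ReM M) t (ReM N)) x) \<le> Re (qform (hmean M t N) x)"
proof -
  obtain y z u where s: "x = y + z" "M *v y = (1 - t) *\<^sub>R u" "N *v z = t *\<^sub>R u" "u = hmean M t N *v x"
    using hm_split[OF assms] by blast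
  have "Re (qform (hmean (ReM M) t (ReM N)) (y + z)) \<le> Re (qform (ReM M) y) / (1 - t) + Re (qform (ReM N) z) / t"
    using hm_lower[OF posdef_ReM_acc[OF assms(1)] posdef_ReM_acc[OF assms(2)] assms(3,4)] .
  also have "\<dots> = Re (qform (hmean M t N) x)"
    using hm_value[OF s assms(3,4)] by (simp add: Re_qform_ReM)
  finally show ?thesis using s(1) by simp
qed

lemma hermitian_hmean:
  assumes "posdef P" "posdef Q" "0 \<le> t" "t \<le> 1"
  shows "hermitian (hmean P t Q)"
proof -
  have hP: "hermitian P" "invertible P" and hQ: "hermitian Q" "invertible Q"
    using assms posdef_def accretive_invertible posdef_accretive by auto
  have "hermitian ((1 - t) *\<^sub>R matrix_inv P + t *\<^sub>R matrix_inv Q)"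
    using hP hQ by (simp add: hermitian_add hermitian_scaleR hermitian_inv)
  moreover have "invertible ((1 - t) *\<^sub>R matrix_inv P + t *\<^sub>R matrix_inv Q)"
    using accretive_hmean(2)[OF posdef_accretive[OF assms(1)] posdef_accretive[OF assms(2)] assms(3,4)] .
  ultimately show ?thesis by (simp add: hmean_def hermitian_inv)
qed

lemma sector_form:
  assumes "numrange A \<subseteq> sector \<alpha>"
  shows "Re (qform A v) \<ge> 0 \<and> \<bar>Im (qform A v)\<bar> \<le> tan \<alpha> * Re (qform A v)"
proof (cases "v = 0")
  case True then show ?thesis by (simp add: qform_ip)
next
  case False
  then have n: "norm v > 0" by simp
  define w where "w = inverse (norm v) *\<^sub>R v"
  have "norm w = 1" using n by (simp add: w_def)
  then have "cnorm2 w = 1" by (simp add: cnorm2_norm)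
  then have "qform A w \<in> sector \<alpha>" using assms by (auto simp: numrange_def)
  then have s: "Re (qform A w) > 0" "\<bar>Im (qform A w)\<bar> \<le> tan \<alpha> * Re (qform A w)"
    by (auto simp: sector_def)
  have q: "qform A w = of_real ((inverse (norm v))^2) * qform A v" by (simp add: w_def qform_scaleR_vec)
  have p: "(inverse (norm v))^2 > 0" using n by simp
  have "Re (qform A v) > 0" using s(1) p by (simp add: q zero_less_mult_iff)
  moreover have "(inverse (norm v))^2 * \<bar>Im (qform A v)\<bar> \<le> (inverse (norm v))^2 * (tan \<alpha> * Re (qform A v))"
    using s(2) p by (simp add: q abs_mult mult_ac)
  then have "\<bar>Im (qform A v)\<bar> \<le> tan \<alpha> * Re (qform A v)"
    using p mult_le_cancel_left_pos by blast
  ultimately show ?thesis by simp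
qed

lemma qform_lin2: "qform A (x + c *s y) = qform A x + c * ip x (A *v y) + cnj c * ip y (A *v x) + cnj c * c * qform A y"
  by (simp add: qform_ip mv_add_right mv_scale_right ip_add_left ip_add_right ip_scale_left ip_scale_right algebra_simps)

lemma sector_ineq:
  assumes S: "numrange A \<subseteq> sector \<alpha>" and a: "0 \<le> \<alpha>" "\<alpha> < pi/2"
  shows "(cos \<alpha>)^2 * (2 * Re (ip p (A *v w)) - Re (qform A p)) \<le> Re (qform A w)"
proof -
  define \<tau> where "\<tau> = tan \<alpha>"
  have tau: "\<tau> \<ge> 0" using tan_pos_pi2_le a by (simp add: \<tau>_def)
  define d where "d = p - w"
  define Z1 where "Z1 = ip d (A *v w)"
  define Z2 where "Z2 = ip w (A *v d)"
  define E where "E = Re Z1 - Re Z2"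
  have key: "2 * Re (ip p (A *v w)) - Re (qform A p) = Re (qform A w) + E - Re (qform A d)"
  proof -
    have p: "p = w + d" by (simp add: d_def)
    show ?thesis unfolding p E_def Z1_def Z2_def
      by (simp add: qform_ip mv_add_right ip_add_left ip_add_right)
  qed
  have expIm: "Im (qform A (d + (\<i> * of_real s) *s w)) = Im (qform A d) + s * E + s^2 * Im (qform A w)" for s
    by (simp add: qform_lin2 E_def Z1_def[symmetric] Z2_def[symmetric] power2_eq_square algebra_simps)
  have expRe: "Re (qform A (d + (\<i> * of_real s) *s w)) = Re (qform A d) - s * (Im Z1 - Im Z2) + s^2 * Re (qform A w)" for s
    by (simp add: qform_lin2 Z1_def[symmetric] Z2_def[symmetric] power2_eq_square algebra_simps)
  have bnd: "2 * s * E \<le> \<tau> * (2 * Re (qform A d) + 2 * s^2 * Re (qform A w))" for s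
  proof -
    have 1: "Im (qform A (d + (\<i> * of_real s) *s w)) \<le> \<tau> * Re (qform A (d + (\<i> * of_real s) *s w))"
      using sector_form[OF S, of "d + (\<i> * of_real s) *s w"] unfolding \<tau>_def by linarith
    have 2: "- Im (qform A (d + (\<i> * of_real (-s)) *s w)) \<le> \<tau> * Re (qform A (d + (\<i> * of_real (-s)) *s w))"
      using sector_form[OF S, of "d + (\<i> * of_real (-s)) *s w"] unfolding \<tau>_def by linarith
    have "2 * s * E = Im (qform A (d + (\<i> * of_real s) *s w)) - Im (qform A (d + (\<i> * of_real (-s)) *s w))"
      apply (simp only: expIm[of s] expIm[of "-s"])
      apply (simp add: algebra_simps power2_eq_square)
      done
    also have "\<dots> \<le> \<tau> * Re (qform A (d + (\<i> * of_real s) *s w)) + \<tau> * Re (qform A (d + (\<i> * of_real (-s)) *s w))"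
      using 1 2 by linarith
    also have "\<dots> = \<tau> * (2 * Re (qform A d) + 2 * s^2 * Re (qform A w))"
      apply (simp only: expRe[of s] expRe[of "-s"])
      apply (simp add: algebra_simps power2_eq_square)
      done
    finally show ?thesis .
  qed
  have Ed: "E \<le> Re (qform A d) + \<tau>^2 * Re (qform A w)"
  proof (cases "\<tau> = 0")
    case True
    have "2 * 1 * E \<le> 0" using bnd[of 1] True by simp
    moreover have "Re (qform A d) \<ge> 0" using sector_form[OF S] by blast
    ultimately show ?thesis using True by simp
  next
    case False
    then have tp: "\<tau> > 0" using tau by simp
    have "\<tau> * (2 * E) \<le> \<tau> * (2 * (Re (qform A d) + \<tau>^2 * Re (qform A w)))"
      using bnd[of \<tau>] by (simp add: algebra_simps power2_eq_square)
    then show ?thesis using tp mult_le_cancel_left_pos by fastforce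
  qed
  have c: "cos \<alpha> > 0" using cos_gt_zero_pi[of \<alpha>] a by simp
  have c1: "(cos \<alpha>)^2 * (1 + \<tau>^2) = 1"
    using c sin_cos_squared_add2[of \<alpha>] by (simp add: \<tau>_def tan_def field_simps power2_eq_square)
  have "2 * Re (ip p (A *v w)) - Re (qform A p) \<le> (1 + \<tau>^2) * Re (qform A w)"
    using key Ed by (simp add: algebra_simps)
  then have "(cos \<alpha>)^2 * (2 * Re (ip p (A *v w)) - Re (qform A p)) \<le> (cos \<alpha>)^2 * ((1 + \<tau>^2) * Re (qform A w))"
    by (simp add: mult_left_mono)
  also have "\<dots> = Re (qform A w)" using c1 by (simp add: mult.assoc[symmetric])
  finally show ?thesis .
qed

lemma qform_inv_sub: assumes "invertible A"
  shows "Re (qform A (matrix_inv A *v q)) = Re (qform (matrix_inv A) q)"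
proof -
  have "qform A (matrix_inv A *v q) = ip (matrix_inv A *v q) q" by (simp add: qform_ip inv_mv_right[OF assms])
  also have "\<dots> = cnj (qform (matrix_inv A) q)" by (simp add: qform_ip ip_cnj)
  finally show ?thesis by simp
qed

lemma sector_cor:
  assumes S: "numrange A \<subseteq> sector \<alpha>" and al: "0 \<le> \<alpha>" "\<alpha> < pi/2" and acc: "accretive A" and a: "a > 0"
  shows "2 * (cos \<alpha>)^2 * Re (ip y v) - Re (qform A y) / a \<le> (cos \<alpha>)^2 * a * Re (qform (matrix_inv A) v)"
proof -
  define c where "c = (cos \<alpha>)^2"
  have "cos \<alpha> > 0" using cos_gt_zero_pi[of \<alpha>] al by simp
  then have cp: "c > 0" by (simp add: c_def)
  have iA: "invertible A" using acc accretive_invertible by blast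
  have "c * (2 * Re (ip ((1/a) *\<^sub>R y) (A *v (matrix_inv A *v (c *\<^sub>R v)))) - Re (qform A ((1/a) *\<^sub>R y)))
        \<le> Re (qform A (matrix_inv A *v (c *\<^sub>R v)))"
    using sector_ineq[OF S al] unfolding c_def by blast
  then have "c * (2 * ((1/a) * c * Re (ip y v)) - (1/a)^2 * Re (qform A y)) \<le> c^2 * Re (qform (matrix_inv A) v)"
    by (simp add: inv_mv_right[OF iA] qform_inv_sub[OF iA] ip_scaleR_left ip_scaleR_right qform_scaleR_vec
        mv_scaleR_right power2_eq_square mult_ac)
  then have "(c / a) * (2 * c * Re (ip y v) - Re (qform A y) / a) \<le> (c / a) * (c * a * Re (qform (matrix_inv A) v))"
    using a by (simp add: field_simps power2_eq_square)
  then have "2 * c * Re (ip y v) - Re (qform A y) / a \<le> c * a * Re (qform (matrix_inv A) v)"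
    using mult_le_cancel_left_pos[of "c / a"] cp a by (meson divide_pos_pos)
  then show ?thesis by (simp add: c_def)
qed

lemma step1:
  assumes acc: "accretive A" "accretive B" and S: "numrange A \<subseteq> sector \<alpha>" "numrange B \<subseteq> sector \<alpha>"
    and al: "0 \<le> \<alpha>" "\<alpha> < pi/2" and t: "0 < t" "t < 1"
  shows "(cos \<alpha>)^2 * Re (qform (hmean A t B) x) \<le> Re (qform (hmean (ReM A) t (ReM B)) x)"
proof -
  define c where "c = (cos \<alpha>)^2"
  define N where "N = (1 - t) *\<^sub>R matrix_inv A + t *\<^sub>R matrix_inv B"
  have iN: "invertible N" using accretive_hmean(2)[OF acc] t by (simp add: N_def)
  define v where "v = hmean A t B *v x"
  have xv: "x = N *v v" by (simp add: v_def hmean_def N_def[symmetric] inv_mv_right[OF iN])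
  obtain y z u where s: "x = y + z" "ReM A *v y = (1 - t) *\<^sub>R u" "ReM B *v z = t *\<^sub>R u"
      "u = hmean (ReM A) t (ReM B) *v x"
    using hm_split[OF posdef_accretive[OF posdef_ReM_acc[OF acc(1)]] posdef_accretive[OF posdef_ReM_acc[OF acc(2)]] t] by blast
  have qH: "Re (qform (hmean (ReM A) t (ReM B)) x) = Re (qform A y) / (1 - t) + Re (qform B z) / t"
    using hm_value[OF s t] by (simp add: Re_qform_ReM)
  have iA: "2 * (c * Re (ip y v)) - Re (qform A y) / (1 - t) \<le> c * ((1 - t) * Re (qform (matrix_inv A) v))"
    using sector_cor[OF S(1) al acc(1), of "1 - t" y v] t unfolding c_def by (simp add: mult.assoc)
  have iB: "2 * (c * Re (ip z v)) - Re (qform B z) / t \<le> c * (t * Re (qform (matrix_inv B) v))"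
    using sector_cor[OF S(2) al acc(2), of t z v] t unfolding c_def by (simp add: mult.assoc)
  have rN: "Re (qform N v) = (1 - t) * Re (qform (matrix_inv A) v) + t * Re (qform (matrix_inv B) v)"
    by (simp add: N_def qform_add qform_scaleR)
  have yz: "Re (ip y v) + Re (ip z v) = Re (qform N v)"
  proof -
    have "Re (ip y v) + Re (ip z v) = Re (ip x v)" by (simp add: s(1) ip_add_left)
    also have "\<dots> = Re (cnj (qform N v))" by (simp add: xv qform_ip ip_cnj)
    finally show ?thesis by simp
  qed
  have W: "Re (qform (hmean A t B) x) = Re (qform N v)"
  proof -
    have "qform (hmean A t B) x = ip (N *v v) v" by (simp add: qform_ip v_def[symmetric] xv[symmetric])
    also have "\<dots> = cnj (qform N v)" by (simp add: qform_ip ip_cnj)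
    finally show ?thesis by simp
  qed
  have h1: "c * Re (ip y v) + c * Re (ip z v) = c * Re (qform N v)" using yz by (metis distrib_left)
  have h2: "c * Re (qform N v) = c * ((1 - t) * Re (qform (matrix_inv A) v)) + c * (t * Re (qform (matrix_inv B) v))"
    by (simp add: rN distrib_left)
  have "c * Re (qform N v) \<le> Re (qform (hmean (ReM A) t (ReM B)) x)"
    using iA iB h1 h2 qH by linarith
  then show ?thesis using W by (simp add: c_def)
qed

definition orthoP :: "'n::finite cmat \<Rightarrow> (complex^'n) set \<Rightarrow> bool" where
  "orthoP P B \<longleftrightarrow> (\<forall>v\<in>B. \<forall>w\<in>B. ip v (P *v w) = (if v = w then 1 else 0))"

lemma ip_mv_sum_scale: "ip w (P *v (\<Sum>v\<in>T. u v *s v)) = (\<Sum>v\<in>T. u v * ip w (P *v v))"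
  by (simp add: mv_sum_right mv_scale_right ip_sum_right ip_scale_right)

lemma orthoP_card:
  fixes P :: "'n::finite cmat"
  assumes "orthoP P B" shows "finite B \<and> card B \<le> CARD('n)"
proof -
  have ind: "vec.independent B"
  proof
    assume "vec.dependent B"
    then obtain T u where T: "finite T" "T \<subseteq> B" "(\<Sum>v\<in>T. u v *s v) = 0" "\<exists>v\<in>T. u v \<noteq> 0"
      unfolding vec.dependent_explicit by blast
    then obtain w where w: "w \<in> T" "u w \<noteq> 0" by blast
    have "0 = ip w (P *v (\<Sum>v\<in>T. u v *s v))" using T(3) by simp
    also have "\<dots> = (\<Sum>v\<in>T. u v * ip w (P *v v))" by (rule ip_mv_sum_scale)
    also have "\<dots> = (\<Sum>v\<in>T. if v = w then u v else 0)"
    proof (rule sum.cong[OF refl])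
      fix v assume v: "v \<in> T"
      have "ip w (P *v v) = (if w = v then 1 else 0)" using assms T(2) w(1) v unfolding orthoP_def by blast
      then show "u v * ip w (P *v v) = (if v = w then u v else 0)" by auto
    qed
    also have "\<dots> = u w" using T(1) w(1) by simp
    finally show False using w(2) by simp
  qed
  have "card B \<le> vec.dim (UNIV :: (complex^'n) set)"
    using vec.independent_card_le_dim[OF _ ind] by blast
  moreover have "vec.dim (UNIV :: (complex^'n) set) = CARD('n)" by (rule vec_dim_card)
  moreover have "finite B" using ind vec.finiteI_independent by blast
  ultimately show ?thesis by (metis ord_le_eq_trans)
qed

definition goodB :: "'n::finite cmat \<Rightarrow> 'n cmat \<Rightarrow> (complex^'n) set \<Rightarrow> (complex^'n \<Rightarrow> real) \<Rightarrow> bool" where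
  "goodB P Q B lam \<longleftrightarrow> orthoP P B \<and> (\<forall>v\<in>B. Q *v v = of_real (lam v) *s (P *v v))"

lemma scaleR_cvec: "r *\<^sub>R (x::complex^'n) = complex_of_real r *s x"
  by (simp add: vec_eq_iff scaleR_conv_of_real[where 'a=complex])

lemma quad_zero:
  fixes X Y :: real
  assumes "\<And>s. 2 * s * X + s^2 * Y \<le> 0"
  shows "X = 0"
proof (rule ccontr)
  assume X: "X \<noteq> 0"
  define e where "e = 1 / (1 + \<bar>Y\<bar>)"
  have e: "e > 0" "e * \<bar>Y\<bar> < 1" by (auto simp: e_def field_simps)
  have "2 * (e * X) * X + (e * X)^2 * Y \<le> 0" using assms .
  then have "e * X^2 * (2 + e * Y) \<le> 0" by (simp add: algebra_simps power2_eq_square)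
  moreover have "2 + e * Y > 0" using e abs_le_iff[of Y] by (smt (verit) mult_left_mono abs_ge_self mult_minus_right)
  moreover have "e * X^2 > 0" using e X by simp
  ultimately show False using mult_pos_pos[of "e * X^2" "2 + e * Y"] by linarith
qed

lemma subspace_V:
  assumes "\<forall>v\<in>B. ip v (P *v x) = 0" "\<forall>v\<in>B. ip v (P *v y) = 0"
  shows "\<forall>v\<in>B. ip v (P *v (x + c *s y)) = 0"
  using assms by (simp add: mv_add_right mv_scale_right ip_add_right ip_scale_right)

lemma gen_spectral_step:
  fixes P Q :: "'n::finite cmat"
  assumes P: "posdef P" and Q: "hermitian Q" and g: "goodB P Q B lam"
    and x0: "x0 \<noteq> (\<Sum>v\<in>B. ip v (P *v x0) *s v)"
  shows "\<exists>v0 l. v0 \<notin> B \<and> goodB P Q (insert v0 B) (lam(v0 := l))"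
proof -
  have hP: "hermitian P" using P posdef_def by blast
  have fin: "finite B" using g orthoP_card goodB_def by blast
  have oB: "orthoP P B" using g goodB_def by blast
  define V where "V = {x. \<forall>v\<in>B. ip v (P *v x) = 0}"
  define prj where "prj x = (\<Sum>v\<in>B. ip v (P *v x) *s v)" for x
  have prjV: "x - prj x \<in> V" for x
  proof -
    have "ip w (P *v (x - prj x)) = 0" if w: "w \<in> B" for w
    proof -
      have "ip w (P *v prj x) = (\<Sum>v\<in>B. ip v (P *v x) * ip w (P *v v))"
        unfolding prj_def by (rule ip_mv_sum_scale)
      also have "\<dots> = (\<Sum>v\<in>B. if v = w then ip v (P *v x) else 0)"
        using oB w by (intro sum.cong refl) (auto simp: orthoP_def)
      also have "\<dots> = ip w (P *v x)" using fin w by simp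
      finally show ?thesis by (simp add: mv_diff_right ip_diff_right)
    qed
    then show ?thesis by (simp add: V_def)
  qed
  have Vsub: "x \<in> V \<Longrightarrow> y \<in> V \<Longrightarrow> x + c *s y \<in> V" for x y c
    unfolding V_def using subspace_V by blast
  have V0: "0 \<in> V" by (simp add: V_def)
  have Vscale: "x \<in> V \<Longrightarrow> c *s x \<in> V" for x c using Vsub[OF V0, of x c] by simp
  have VscaleR: "x \<in> V \<Longrightarrow> r *\<^sub>R x \<in> V" for x r
    using Vscale[of x "of_real r"] by (simp add: scaleR_cvec)
  define r0 where "r0 = x0 - prj x0"
  have r0: "r0 \<in> V" "r0 \<noteq> 0" using prjV x0 by (auto simp: r0_def prj_def)
  obtain m where m: "\<forall>x. m * (norm x)^2 \<le> Re (qform P x)" "m > 0" using qform_lower[of P] P by blast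
  define K where "K = V \<inter> {x. Re (qform P x) = 1}"
  have clV: "closed V"
  proof -
    have "V = (\<Inter>v\<in>B. {x. ip v (P *v x) = 0})" by (auto simp: V_def)
    moreover have "closed {x. ip v (P *v x) = 0}" for v
      by (rule closed_Collect_eq) (auto simp: ip_def matrix_vector_mult_def intro!: continuous_intros)
    ultimately show ?thesis by auto
  qed
  have clK: "closed K" unfolding K_def
    by (intro closed_Int clV closed_Collect_eq) (auto intro!: cont_qform continuous_intros)
  have bK: "bounded K"
  proof -
    have "K \<subseteq> cball 0 (sqrt (1 / m))"
    proof
      fix x assume "x \<in> K"
      then have "Re (qform P x) = 1" by (simp add: K_def)
      then have "m * (norm x)^2 \<le> 1" using m(1)[rule_format, of x] by simp
      then have "(norm x)^2 \<le> 1 / m" using m(2) by (simp add: field_simps mult.commute)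
      then have "norm x \<le> sqrt (1 / m)" using real_le_rsqrt by blast
      then show "x \<in> cball 0 (sqrt (1 / m))" by simp
    qed
    then show ?thesis using bounded_cball bounded_subset by blast
  qed
  have posP: "x \<noteq> 0 \<Longrightarrow> Re (qform P x) > 0" for x using P posdef_def by blast
  have normalize: "(1 / sqrt (Re (qform P x))) *\<^sub>R x \<in> K" if "x \<in> V" "x \<noteq> 0" for x
  proof -
    have p: "Re (qform P x) > 0" using posP that(2) .
    have "Re (qform P ((1 / sqrt (Re (qform P x))) *\<^sub>R x)) = 1"
      using p by (simp add: qform_scaleR_vec power_divide)
    then show ?thesis using VscaleR[OF that(1)] by (simp add: K_def)
  qed
  have Kne: "K \<noteq> {}" using normalize[OF r0] by blast
  obtain v0 where v0: "v0 \<in> K" and vmax: "\<forall>y\<in>K. Re (qform Q y) \<le> Re (qform Q v0)"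
    using continuous_attains_sup[OF compact_eq_bounded_closed[THEN iffD2, OF conjI[OF bK clK]] Kne cont_qform]
    by blast
  define l where "l = Re (qform Q v0)"
  have v0V: "v0 \<in> V" and v0P: "Re (qform P v0) = 1" using v0 by (auto simp: K_def)
  have v0ne: "v0 \<noteq> 0" using v0P by (auto simp: qform_ip)
  have bound: "Re (qform Q x) \<le> l * Re (qform P x)" if "x \<in> V" for x
  proof (cases "x = 0")
    case True then show ?thesis by (simp add: qform_ip)
  next
    case False
    have p: "Re (qform P x) > 0" using posP False .
    have "Re (qform Q ((1 / sqrt (Re (qform P x))) *\<^sub>R x)) \<le> l"
      using vmax normalize[OF that False] by (simp add: l_def)
    then have "Re (qform Q x) / Re (qform P x) \<le> l"
      using p by (simp add: qform_scaleR_vec power_divide)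
    then show ?thesis using p by (simp add: field_simps)
  qed
  define D where "D = Q - l *\<^sub>R P"
  have hD: "hermitian D" using Q hP by (simp add: D_def hermitian_diff hermitian_scaleR)
  have qD: "Re (qform D x) = Re (qform Q x) - l * Re (qform P x)" for x
    by (simp add: D_def qform_diff qform_scaleR)
  have D0: "Re (qform D v0) = 0" using v0P by (simp add: qD l_def)
  have Dle: "x \<in> V \<Longrightarrow> Re (qform D x) \<le> 0" for x using bound qD by fastforce
  have reV: "Re (ip u (D *v v0)) = 0" if u: "u \<in> V" for u
  proof (rule quad_zero)
    fix s :: real
    have "v0 + s *\<^sub>R u \<in> V" using Vsub[OF v0V u, of "of_real s"] by (simp add: scaleR_cvec)
    then have "Re (qform D (v0 + s *\<^sub>R u)) \<le> 0" using Dle by blast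
    moreover have "Re (qform D (v0 + s *\<^sub>R u)) = 2 * s * Re (ip u (D *v v0)) + s^2 * Re (qform D u)"
      using herm_expand[OF hD, of v0 "s *\<^sub>R u"] D0 by (simp add: ip_scaleR_left qform_scaleR_vec)
    ultimately show "2 * s * Re (ip u (D *v v0)) + s^2 * Re (qform D u) \<le> 0" by simp
  qed
  have ipV: "ip u (D *v v0) = 0" if u: "u \<in> V" for u
  proof -
    have "Re (ip (\<i> *s u) (D *v v0)) = 0" using reV Vscale[OF u] by blast
    then have "Im (ip u (D *v v0)) = 0" by (simp add: ip_scale_left)
    then show ?thesis using reV[OF u] by (simp add: complex_eq_iff)
  qed
  have ipB: "ip w (D *v v0) = 0" if w: "w \<in> B" for w
  proof -
    have "ip w (Q *v v0) = ip (Q *v w) v0" using hermitian_ip[OF Q] .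
    also have "\<dots> = cnj (of_real (lam w)) * ip (P *v w) v0"
      using g w by (simp add: goodB_def ip_scale_left)
    also have "\<dots> = of_real (lam w) * ip w (P *v v0)" by (simp add: hermitian_ip[OF hP])
    also have "\<dots> = 0" using v0V w by (simp add: V_def)
    finally have "ip w (Q *v v0) = 0" .
    moreover have "ip w (P *v v0) = 0" using v0V w by (simp add: V_def)
    ultimately show ?thesis by (simp add: D_def mv_diff mv_scaleR ip_diff_right ip_scaleR_right)
  qed
  have allx: "ip x (D *v v0) = 0" for x
  proof -
    have "x = (x - prj x) + prj x" by simp
    then have "ip x (D *v v0) = ip (x - prj x) (D *v v0) + ip (prj x) (D *v v0)"
      by (metis ip_add_left)
    also have "ip (prj x) (D *v v0) = (\<Sum>v\<in>B. cnj (ip v (P *v x)) * ip v (D *v v0))"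
      by (simp add: prj_def ip_sum_left ip_scale_left)
    also have "\<dots> = 0" using ipB by simp
    finally show ?thesis using ipV[OF prjV] by simp
  qed
  have "ip (D *v v0) (D *v v0) = 0" using allx .
  then have Dv0: "D *v v0 = 0" by (simp add: ip_self)
  have eig: "Q *v v0 = of_real l *s (P *v v0)"
    using Dv0 by (simp add: D_def mv_diff mv_scaleR scaleR_cvec)
  have v0B: "v0 \<notin> B"
  proof
    assume "v0 \<in> B"
    then have "ip v0 (P *v v0) = 0" using v0V by (simp add: V_def)
    then show False using v0P by (simp add: qform_ip)
  qed
  have pv0: "ip v0 (P *v v0) = 1"
    using hermitian_qform_real[OF hP, of v0] v0P by (simp add: qform_ip)
  have "orthoP P (insert v0 B)"
    unfolding orthoP_def
  proof (intro ballI)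
    fix v w assume v: "v \<in> insert v0 B" and w: "w \<in> insert v0 B"
    show "ip v (P *v w) = (if v = w then 1 else 0)"
    proof (cases "v = v0")
      case True
      show ?thesis
      proof (cases "w = v0")
        case True then show ?thesis using \<open>v = v0\<close> pv0 by simp
      next
        case False
        then have wB: "w \<in> B" using w by simp
        have "ip v0 (P *v w) = cnj (ip w (P *v v0))" using hermitian_ip_cnj[OF hP] .
        also have "\<dots> = 0" using v0V wB by (simp add: V_def)
        finally show ?thesis using True False by simp
      qed
    next
      case False
      then have vB: "v \<in> B" using v by simp
      show ?thesis
      proof (cases "w = v0")
        case True then show ?thesis using v0V vB v0B by (auto simp: V_def)
      next
        case False then show ?thesis using oB vB w by (auto simp: orthoP_def)
      qed
    qed
  qed
  moreover have "\<forall>v\<in>insert v0 B. Q *v v = of_real ((lam(v0 := l)) v) *s (P *v v)"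
    using g eig v0B by (auto simp: goodB_def)
  ultimately show ?thesis using v0B by (auto simp: goodB_def)
qed

lemma gen_spectral:
  fixes P Q :: "'n::finite cmat"
  assumes P: "posdef P" and Q: "hermitian Q"
  shows "\<exists>B lam. goodB P Q B lam \<and> finite B \<and> (\<forall>x. x = (\<Sum>v\<in>B. ip v (P *v x) *s v))"
proof -
  define S where "S = {card B | B lam. goodB P Q B lam}"
  have Sb: "S \<subseteq> {..CARD('n)}" using orthoP_card by (auto simp: S_def goodB_def)
  then have fS: "finite S" using finite_subset by blast
  have "goodB P Q {} (\<lambda>_. 0)" unfolding goodB_def orthoP_def by simp
  then have "card ({}::(complex^'n) set) \<in> S" unfolding S_def by blast
  then have Sne: "S \<noteq> {}" by blast
  have "Max S \<in> S" using Max_in[OF fS Sne] .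
  then obtain B lam where g: "goodB P Q B lam" and c: "card B = Max S" by (auto simp: S_def)
  have fin: "finite B" using g orthoP_card goodB_def by blast
  have "\<forall>x. x = (\<Sum>v\<in>B. ip v (P *v x) *s v)"
  proof (rule ccontr)
    assume "\<not> ?thesis"
    then obtain x0 where "x0 \<noteq> (\<Sum>v\<in>B. ip v (P *v x0) *s v)" by blast
    then obtain v0 l where v0: "v0 \<notin> B" "goodB P Q (insert v0 B) (lam(v0 := l))"
      using gen_spectral_step[OF P Q g] by blast
    then have "card (insert v0 B) \<in> S" unfolding S_def by blast
    then have "card (insert v0 B) \<le> Max S" using Max_ge[OF fS] by blast
    then show False using c v0(1) fin by simp
  qed
  then show ?thesis using g fin by blast
qed

lemma scal_arith:
  fixes a b l qy qz R :: real
  assumes a: "a > 0" and b: "b > 0" and l: "l > 0"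
    and nn: "0 \<le> b^2 * qy - 2 * (a * l * b) * R + (a * l)^2 * qz"
  shows "(1 / (a + b / l)) * (qy + 2 * R + qz) \<le> qy / a + l * qz / b"
proof -
  have eq: "qy / a + l * qz / b - (1 / (a + b / l)) * (qy + 2 * R + qz) =
      (b^2 * qy - 2 * (a * l * b) * R + (a * l)^2 * qz) / (a * b * (a * l + b))"
  proof -
    have d1: "a * l + b > 0" "b + a * l > 0" using a b l by (simp_all add: add_pos_pos)
    have d2: "a + b / l = (a * l + b) / l" using l by (simp add: field_simps)
    show ?thesis unfolding d2 using a b l d1 by (simp add: field_simps power2_eq_square)
  qed
  have "(b^2 * qy - 2 * (a * l * b) * R + (a * l)^2 * qz) / (a * b * (a * l + b)) \<ge> 0"
    using nn a b l by (simp add: divide_nonneg_pos)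
  then show ?thesis using eq by linarith
qed

lemma scal_ineq:
  assumes F: "psd F" and l: "l > 0" and t: "0 < t" "t < 1"
  shows "(1 / ((1 - t) + t / l)) * Re (qform F (y + z)) \<le> Re (qform F y) / (1 - t) + l * Re (qform F z) / t"
proof -
  have hF: "hermitian F" using F psd_def by blast
  define R where "R = Re (ip z (F *v y))"
  have e1: "Re (qform F (y + z)) = Re (qform F y) + 2 * R + Re (qform F z)"
    using herm_expand[OF hF, of y z] by (simp add: R_def)
  have e2: "Re (qform F (t *\<^sub>R y + (- ((1 - t) * l)) *\<^sub>R z)) =
      t^2 * Re (qform F y) - 2 * ((1 - t) * l * t) * R + ((1 - t) * l)^2 * Re (qform F z)"
    using herm_expand[OF hF, of "t *\<^sub>R y" "(- ((1 - t) * l)) *\<^sub>R z"]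
    by (simp add: R_def qform_scaleR_vec mv_scaleR_right ip_scaleR_left ip_scaleR_right power2_eq_square mult_ac
        ip_minus_left qform_minus_vec)
  have nn: "0 \<le> t^2 * Re (qform F y) - 2 * ((1 - t) * l * t) * R + ((1 - t) * l)^2 * Re (qform F z)"
    using F e2 unfolding psd_def by metis
  show ?thesis unfolding e1 using scal_arith[OF _ t(1) l nn] t by simp
qed

definition op :: "complex^'n::finite \<Rightarrow> 'n cmat" where "op w = (\<chi> i j. w$i * cnj (w$j))"

lemma op_mv: "op w *v x = ip w x *s w"
  by (simp add: op_def vec_eq_iff matrix_vector_mult_def ip_def sum_distrib_left sum_distrib_right mult_ac)

lemma op_psd: "psd (op w)"
proof -
  have "hermitian (op w)" by (simp add: hermitian_def op_def cadj_def vec_eq_iff mult.commute)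
  moreover have "Re (qform (op w) x) \<ge> 0" for x
  proof -
    have "qform (op w) x = ip w x * cnj (ip w x)" by (simp add: qform_ip op_mv ip_scale_right ip_cnj mult.commute)
    then show ?thesis by (simp add: complex_norm_square[symmetric])
  qed
  ultimately show ?thesis by (simp add: psd_def)
qed

lemma sum_op_mv: "(\<Sum>v\<in>B. f v *\<^sub>R op (g v)) *v x = (\<Sum>v\<in>B. (of_real (f v) * ip (g v) x) *s g v)"
  by (simp add: mv_sum mv_scaleR op_mv scaleR_cvec vector_smult_assoc)

lemma ortho_pick:
  assumes "orthoP P B" "hermitian P" "u \<in> B" "finite B"
  shows "ip (P *v u) (\<Sum>v\<in>B. c v *s v) = c u"
proof -
  have "ip (P *v u) (\<Sum>v\<in>B. c v *s v) = (\<Sum>v\<in>B. c v * ip u (P *v v))"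
    by (simp add: ip_sum_right ip_scale_right hermitian_ip[OF assms(2)])
  also have "\<dots> = (\<Sum>v\<in>B. if v = u then c v else 0)"
  proof (rule sum.cong[OF refl])
    fix v assume v: "v \<in> B"
    have "ip u (P *v v) = (if u = v then 1 else 0)" using assms(1,3) v unfolding orthoP_def by blast
    then show "c v * ip u (P *v v) = (if v = u then c v else 0)" by auto
  qed
  also have "\<dots> = c u" using assms(3,4) by simp
  finally show ?thesis .
qed

lemma hmean_decomp:
  fixes P Q :: "'n::finite cmat"
  assumes P: "posdef P" and Q: "posdef Q" and t: "0 < t" "t < 1"
  shows "\<exists>B lam. finite B \<and> (\<forall>v\<in>B. lam v > 0) \<and>
     P = (\<Sum>v\<in>B. 1 *\<^sub>R op (P *v v)) \<and> Q = (\<Sum>v\<in>B. lam v *\<^sub>R op (P *v v)) \<and>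
     hmean P t Q = (\<Sum>v\<in>B. (1 / ((1 - t) + t / lam v)) *\<^sub>R op (P *v v))"
proof -
  have hP: "hermitian P" and hQ: "hermitian Q" using P Q posdef_def by auto
  obtain B lam where g: "goodB P Q B lam" and fin: "finite B" and ex: "\<forall>x. x = (\<Sum>v\<in>B. ip v (P *v x) *s v)"
    using gen_spectral[OF P hQ] by blast
  have oB: "orthoP P B" and eig: "\<forall>v\<in>B. Q *v v = of_real (lam v) *s (P *v v)" using g unfolding goodB_def by auto
  have one: "ip v (P *v v) = 1" if "v \<in> B" for v using oB that unfolding orthoP_def by auto
  have lpos: "lam v > 0" if v: "v \<in> B" for v
  proof -
    have "v \<noteq> 0" using one[OF v] by auto
    then have "Re (qform Q v) > 0" using Q posdef_def by blast
    moreover have "qform Q v = of_real (lam v)" using eig v one[OF v] by (simp add: qform_ip ip_scale_right)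
    ultimately show ?thesis by simp
  qed
  have ipsym: "ip (P *v v) x = ip v (P *v x)" for v x using hermitian_ip[OF hP] by simp
  have Pd: "P = (\<Sum>v\<in>B. 1 *\<^sub>R op (P *v v))"
  proof (subst matrix_eq, rule allI)
    fix x
    have "P *v x = P *v (\<Sum>v\<in>B. ip v (P *v x) *s v)" using ex by metis
    also have "\<dots> = (\<Sum>v\<in>B. ip v (P *v x) *s (P *v v))" by (simp add: mv_sum_right mv_scale_right)
    also have "\<dots> = (\<Sum>v\<in>B. 1 *\<^sub>R op (P *v v)) *v x" by (simp only: sum_op_mv) (simp add: ipsym)
    finally show "P *v x = (\<Sum>v\<in>B. 1 *\<^sub>R op (P *v v)) *v x" .
  qed
  have Qd: "Q = (\<Sum>v\<in>B. lam v *\<^sub>R op (P *v v))"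
  proof (subst matrix_eq, rule allI)
    fix x
    have "Q *v x = Q *v (\<Sum>v\<in>B. ip v (P *v x) *s v)" using ex by metis
    also have "\<dots> = (\<Sum>v\<in>B. ip v (P *v x) *s (Q *v v))" by (simp add: mv_sum_right mv_scale_right)
    also have "\<dots> = (\<Sum>v\<in>B. (of_real (lam v) * ip v (P *v x)) *s (P *v v))"
      using eig by (intro sum.cong refl) (simp add: vector_smult_assoc mult.commute)
    also have "\<dots> = (\<Sum>v\<in>B. lam v *\<^sub>R op (P *v v)) *v x" by (simp add: sum_op_mv ipsym)
    finally show "Q *v x = (\<Sum>v\<in>B. lam v *\<^sub>R op (P *v v)) *v x" .
  qed
  define G where "G = (\<Sum>v\<in>B. 1 *\<^sub>R op v)"
  have GP: "G ** P = mat 1"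
  proof (subst matrix_eq, rule allI)
    fix x
    have "(G ** P) *v x = G *v (P *v x)" by (simp add: matrix_vector_mul_assoc)
    also have "\<dots> = (\<Sum>v\<in>B. ip v (P *v x) *s v)" by (simp only: G_def sum_op_mv) simp
    also have "\<dots> = x" using ex by metis
    finally show "(G ** P) *v x = mat 1 *v x" by simp
  qed
  have iP: "matrix_inv P = G" using inv_unique[OF GP] .
  have PG: "P ** G = mat 1" using GP matrix_left_right_inverse by blast
  define G2 where "G2 = (\<Sum>v\<in>B. (1 / lam v) *\<^sub>R op v)"
  have GQ: "G2 ** Q = mat 1"
  proof (subst matrix_eq, rule allI)
    fix x
    have "(G2 ** Q) *v x = G2 *v (Q *v x)" by (simp add: matrix_vector_mul_assoc)
    also have "\<dots> = (\<Sum>v\<in>B. (of_real (1 / lam v) * ip v (Q *v x)) *s v)" by (simp add: G2_def sum_op_mv)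
    also have "\<dots> = (\<Sum>v\<in>B. ip v (P *v x) *s v)"
    proof (rule sum.cong[OF refl])
      fix v assume v: "v \<in> B"
      have "ip v (Q *v x) = ip (Q *v v) x" using hermitian_ip[OF hQ] .
      also have "\<dots> = of_real (lam v) * ip v (P *v x)" using eig v by (simp add: ip_scale_left ipsym)
      finally show "(of_real (1 / lam v) * ip v (Q *v x)) *s v = ip v (P *v x) *s v"
        using lpos[OF v] by simp
    qed
    also have "\<dots> = x" using ex by metis
    finally show "(G2 ** Q) *v x = mat 1 *v x" by simp
  qed
  have iQ: "matrix_inv Q = G2" using inv_unique[OF GQ] .
  define c where "c v = (1 - t) + t / lam v" for v
  have cpos: "c v > 0" if "v \<in> B" for v using lpos[OF that] t by (simp add: c_def add_pos_nonneg)
  define M where "M = (1 - t) *\<^sub>R matrix_inv P + t *\<^sub>R matrix_inv Q"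
  have Md: "M = (\<Sum>v\<in>B. c v *\<^sub>R op v)"
    by (simp add: M_def iP iQ G_def G2_def c_def scaleR_sum_right sum.distrib[symmetric] scaleR_add_left)
  define H where "H = (\<Sum>v\<in>B. (1 / c v) *\<^sub>R op (P *v v))"
  have HM: "H ** M = mat 1"
  proof (subst matrix_eq, rule allI)
    fix x
    have "(H ** M) *v x = H *v (M *v x)" by (simp add: matrix_vector_mul_assoc)
    also have "\<dots> = (\<Sum>u\<in>B. (of_real (1 / c u) * ip (P *v u) (M *v x)) *s (P *v u))"
      by (simp add: H_def sum_op_mv)
    also have "\<dots> = (\<Sum>u\<in>B. ip u x *s (P *v u))"
    proof (rule sum.cong[OF refl])
      fix u assume u: "u \<in> B"
      have "ip (P *v u) (M *v x) = of_real (c u) * ip u x"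
        unfolding Md sum_op_mv using ortho_pick[OF oB hP u fin] .
      then show "(of_real (1 / c u) * ip (P *v u) (M *v x)) *s (P *v u) = ip u x *s (P *v u)"
        using cpos[OF u] by simp
    qed
    also have "\<dots> = P *v (G *v x)" by (simp only: G_def sum_op_mv) (simp add: mv_sum_right mv_scale_right)
    also have "\<dots> = x" by (simp add: matrix_vector_mul_assoc PG)
    finally show "(H ** M) *v x = mat 1 *v x" by simp
  qed
  have "hmean P t Q = H" unfolding hmean_def M_def[symmetric] using inv_unique[OF HM] .
  then show ?thesis using fin lpos Pd Qd by (auto simp: H_def c_def)
qed

lemma Re_qform_sum_scaleR: "Re (qform (\<Sum>v\<in>B. f v *\<^sub>R F v) x) = (\<Sum>v\<in>B. f v * Re (qform (F v) x))"
  by (simp add: qform_sum qform_scaleR)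

lemma (in plm) ando:
  assumes P: "posdef P" and Q: "posdef Q" and t: "0 < t" "t < 1"
  shows "Re (qform (\<Phi> (hmean P t Q)) x) \<le> Re (qform (hmean (\<Phi> P) t (\<Phi> Q)) x)"
proof -
  obtain B lam where fin: "finite B" and lpos: "\<forall>v\<in>B. lam v > 0"
    and Pd: "P = (\<Sum>v\<in>B. 1 *\<^sub>R op (P *v v))" and Qd: "Q = (\<Sum>v\<in>B. lam v *\<^sub>R op (P *v v))"
    and Hd: "hmean P t Q = (\<Sum>v\<in>B. (1 / ((1 - t) + t / lam v)) *\<^sub>R op (P *v v))"
    using hmean_decomp[OF P Q t] by blast
  define F where "F v = \<Phi> (op (P *v v))" for v
  have Fpsd: "psd (F v)" for v unfolding F_def by (rule psd[OF op_psd])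
  have PhiP: "\<Phi> P = (\<Sum>v\<in>B. 1 *\<^sub>R F v)" by (subst Pd) (simp add: sum scaleR F_def)
  have PhiQ: "\<Phi> Q = (\<Sum>v\<in>B. lam v *\<^sub>R F v)" by (subst Qd) (simp add: sum scaleR F_def)
  have PhiH: "\<Phi> (hmean P t Q) = (\<Sum>v\<in>B. (1 / ((1 - t) + t / lam v)) *\<^sub>R F v)"
    by (subst Hd) (simp add: sum scaleR F_def)
  have core: "Re (qform (\<Phi> (hmean P t Q)) (y + z)) \<le> Re (qform (\<Phi> P) y) / (1 - t) + Re (qform (\<Phi> Q) z) / t" for y z
  proof -
    have "Re (qform (\<Phi> (hmean P t Q)) (y + z)) = (\<Sum>v\<in>B. (1 / ((1 - t) + t / lam v)) * Re (qform (F v) (y + z)))"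
      unfolding PhiH by (rule Re_qform_sum_scaleR)
    also have "\<dots> \<le> (\<Sum>v\<in>B. Re (qform (F v) y) / (1 - t) + lam v * Re (qform (F v) z) / t)"
      using scal_ineq[OF Fpsd _ t] lpos by (intro sum_mono) auto
    also have "\<dots> = (\<Sum>v\<in>B. 1 * Re (qform (F v) y)) / (1 - t) + (\<Sum>v\<in>B. lam v * Re (qform (F v) z)) / t"
      by (simp add: sum.distrib sum_divide_distrib)
    also have "\<dots> = Re (qform (\<Phi> P) y) / (1 - t) + Re (qform (\<Phi> Q) z) / t"
      unfolding PhiP PhiQ Re_qform_sum_scaleR ..
    finally show ?thesis .
  qed
  have aP: "accretive (\<Phi> P)" and aQ: "accretive (\<Phi> Q)"
    using posdef_accretive posdef P Q by auto
  obtain y z u where s: "x = y + z" "\<Phi> P *v y = (1 - t) *\<^sub>R u" "\<Phi> Q *v z = t *\<^sub>R u"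
      "u = hmean (\<Phi> P) t (\<Phi> Q) *v x"
    using hm_split[OF aP aQ t] by blast
  show ?thesis using core[of y z] hm_value[OF s t] s(1) by simp
qed

lemma hmean_0: "accretive A \<Longrightarrow> hmean A 0 B = A"
  by (simp add: hmean_def inv_inv accretive_invertible)
lemma hmean_1: "accretive B \<Longrightarrow> hmean A 1 B = B"
  by (simp add: hmean_def inv_inv accretive_invertible)

lemma (in plm) pointwise:
  assumes acc: "accretive A" "accretive B" and S: "numrange A \<subseteq> sector \<alpha>" "numrange B \<subseteq> sector \<alpha>"
    and al: "0 \<le> \<alpha>" "\<alpha> < pi/2" and t: "0 \<le> t" "t \<le> 1"
  shows "Re (qform (\<Phi> (hmean A t B)) x) \<le> (1 / (cos \<alpha>)^2) * Re (qform (hmean (\<Phi> A) t (\<Phi> B)) x)"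
proof -
  define c where "c = (cos \<alpha>)^2"
  have cpos: "c > 0" using cos_gt_zero_pi[of \<alpha>] al by (simp add: c_def)
  have "(sin \<alpha>)^2 \<ge> 0" by simp
  then have cle: "c \<le> 1" using sin_cos_squared_add2[of \<alpha>] unfolding c_def by linarith
  have ic: "1 / c \<ge> 1" using cpos cle by simp
  have aA: "accretive (\<Phi> A)" and aB: "accretive (\<Phi> B)" using accretive acc by auto
  have nonneg: "Re (qform (\<Phi> M) x) \<ge> 0" if "accretive M" for M
  proof -
    have ps: "psd (ReM M)" using posdef_nonneg[OF posdef_ReM_acc[OF that]] hermitian_ReM by (simp add: psd_def)
    have "Re (qform (\<Phi> M) x) = Re (qform (\<Phi> (ReM M)) x)" by (simp add: ReM Re_qform_ReM)
    also have "\<dots> \<ge> 0" using psd_form[OF ps] .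
    finally show ?thesis .
  qed
  have triv: "r \<le> (1 / c) * r" if "r \<ge> 0" for r using mult_right_mono[OF ic that] by simp
  consider "t = 0" | "t = 1" | "0 < t \<and> t < 1" using t by linarith
  then show ?thesis
  proof cases
    case 1 then show ?thesis using triv nonneg acc aA by (simp add: hmean_0 c_def)
  next
    case 2 then show ?thesis using triv nonneg acc aB by (simp add: hmean_1 c_def)
  next
    case 3
    then have t': "0 < t" "t < 1" by auto
    define W where "W = hmean A t B"
    define H where "H = hmean (ReM A) t (ReM B)"
    have pA: "posdef (ReM A)" and pB: "posdef (ReM B)" using acc accretive_def by auto
    have hH: "hermitian H" unfolding H_def using hermitian_hmean[OF pA pB t] .
    have s1: "c * Re (qform W x') \<le> Re (qform H x')" for x'
      unfolding W_def H_def c_def using step1[OF acc S al t'] .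
    have ps: "psd ((1 / c) *\<^sub>R H - ReM W)"
    proof -
      have "Re (qform ((1 / c) *\<^sub>R H - ReM W) x') \<ge> 0" for x'
      proof -
        have "c * Re (qform W x') \<le> c * ((1 / c) * Re (qform H x'))" using s1[of x'] cpos by simp
        then have "Re (qform W x') \<le> (1 / c) * Re (qform H x')" using cpos mult_le_cancel_left_pos by blast
        then show ?thesis by (simp add: qform_diff qform_scaleR Re_qform_ReM)
      qed
      then show ?thesis using hH by (simp add: psd_def hermitian_diff hermitian_scaleR hermitian_ReM)
    qed
    have "Re (qform (\<Phi> W) x) = Re (qform (\<Phi> (ReM W)) x)" by (simp add: ReM Re_qform_ReM)
    also have "\<dots> \<le> Re (qform (\<Phi> ((1 / c) *\<^sub>R H)) x)" using mono_form[OF ps] .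
    also have "\<dots> = (1 / c) * Re (qform (\<Phi> H) x)" by (simp add: scaleR qform_scaleR)
    also have "\<dots> \<le> (1 / c) * Re (qform (hmean (\<Phi> (ReM A)) t (\<Phi> (ReM B))) x)"
      using ando[OF pA pB t', of x] cpos unfolding H_def by (simp add: divide_right_mono)
    also have "\<dots> \<le> (1 / c) * Re (qform (hmean (\<Phi> A) t (\<Phi> B)) x)"
      using hm_ReM_le[OF aA aB t', of x] cpos unfolding ReM by (simp add: divide_right_mono)
    finally show ?thesis by (simp add: W_def c_def)
  qed
qed

lemma acc_lower: assumes "accretive M" shows "\<exists>m>0. \<forall>y. m * (norm y)^2 \<le> Re (qform M y)"
  using qform_lower[of "ReM M"] assms by (auto simp: accretive_def Re_qform_ReM)

lemma bl_mv: "bounded_linear (\<lambda>w::complex^'n::finite. D *v w)"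
  unfolding linear_conv_bounded_linear[symmetric]
  by (intro linearI) (simp_all add: mv_add_right mv_scaleR_right)

lemma mv_axis: "(M *v axis j (1::complex)) $ i = M $ i $ j"
  by (simp add: matrix_vector_mult_def axis_def if_distrib[of "(*) _"] cong: if_cong)

lemma cont_hmean:
  fixes A B :: "'n::finite cmat"
  assumes acc: "accretive A" "accretive B"
  shows "continuous_on {0..1} (\<lambda>t. hmean A t B)"
proof -
  define X where "X t = (1 - t) *\<^sub>R matrix_inv A + t *\<^sub>R matrix_inv B" for t
  define Y where "Y t = matrix_inv (X t)" for t
  define D where "D = matrix_inv A - matrix_inv B"
  obtain mA where mA: "mA > 0" "\<forall>y. mA * (norm y)^2 \<le> Re (qform (matrix_inv A) y)"
    using acc_lower[OF accretive_inv[OF acc(1)]] by blast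
  obtain mB where mB: "mB > 0" "\<forall>y. mB * (norm y)^2 \<le> Re (qform (matrix_inv B) y)"
    using acc_lower[OF accretive_inv[OF acc(2)]] by blast
  define m where "m = min mA mB"
  have m: "m > 0" using mA mB by (simp add: m_def)
  have lowX: "m * (norm y)^2 \<le> Re (qform (X t) y)" if t: "t \<in> {0..1}" for t y
  proof -
    have a1: "m * (norm y)^2 \<le> mA * (norm y)^2" by (intro mult_right_mono) (auto simp: m_def)
    have b1: "m * (norm y)^2 \<le> mB * (norm y)^2" by (intro mult_right_mono) (auto simp: m_def)
    have 1: "(1 - t) * (m * (norm y)^2) \<le> (1 - t) * Re (qform (matrix_inv A) y)"
      using t order_trans[OF a1 mA(2)[rule_format, of y]] by (intro mult_left_mono) auto
    have 2: "t * (m * (norm y)^2) \<le> t * Re (qform (matrix_inv B) y)"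
      using t order_trans[OF b1 mB(2)[rule_format, of y]] by (intro mult_left_mono) auto
    have "Re (qform (X t) y) = (1 - t) * Re (qform (matrix_inv A) y) + t * Re (qform (matrix_inv B) y)"
      by (simp add: X_def qform_add qform_scaleR)
    then show ?thesis using 1 2 by (simp add: algebra_simps)
  qed
  have invX: "invertible (X t)" if "t \<in> {0..1}" for t
    using accretive_hmean(2)[OF acc] that by (simp add: X_def)
  have Yb: "norm (Y t *v v) \<le> norm v / m" if t: "t \<in> {0..1}" for t v
  proof -
    define y where "y = Y t *v v"
    have Xy: "X t *v y = v" by (simp add: y_def Y_def inv_mv_right[OF invX[OF t]])
    have "m * (norm y)^2 \<le> Re (qform (X t) y)" using lowX[OF t] .
    also have "\<dots> = inner y v" by (simp add: qform_ip Xy Re_ip)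
    also have "\<dots> \<le> norm y * norm v" by (rule norm_cauchy_schwarz)
    finally have "m * (norm y)^2 \<le> norm y * norm v" .
    then have "m * norm y \<le> norm v"
      by (cases "norm y = 0") (auto simp: power2_eq_square mult.assoc[symmetric] mult_le_cancel_right)
    then show ?thesis using m by (simp add: y_def field_simps)
  qed
  obtain K where K: "K > 0" "\<forall>w. norm (D *v w) \<le> norm w * K"
    using bounded_linear.pos_bounded[OF bl_mv[of D]] by blast
  have XD: "X s - X t = (t - s) *\<^sub>R D" for s t by (simp add: X_def D_def algebra_simps)
  have lip: "((K / m^2)*(norm v))-lipschitz_on {0..1} (\<lambda>t. Y t *v v)" for v
  proof (rule lipschitz_onI)
    fix t s :: real assume t: "t \<in> {0..1}" and s: "s \<in> {0..1}"
    have "Y t *v v - Y s *v v = Y t *v ((X s - X t) *v (Y s *v v))"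
      by (simp add: mv_diff mv_diff_right Y_def inv_mv_right[OF invX[OF s]] inv_mv_left[OF invX[OF t]])
    also have "\<dots> = Y t *v ((t - s) *\<^sub>R (D *v (Y s *v v)))" by (simp add: XD mv_scaleR)
    finally have e: "Y t *v v - Y s *v v = Y t *v ((t - s) *\<^sub>R (D *v (Y s *v v)))" .
    have "norm (Y t *v v - Y s *v v) \<le> norm ((t - s) *\<^sub>R (D *v (Y s *v v))) / m" unfolding e using Yb[OF t] .
    also have "\<dots> = \<bar>t - s\<bar> * norm (D *v (Y s *v v)) / m" by simp
    also have "\<dots> \<le> \<bar>t - s\<bar> * (norm (Y s *v v) * K) / m"
      using K(2) m by (intro divide_right_mono mult_left_mono) auto
    also have "\<dots> \<le> \<bar>t - s\<bar> * ((norm v / m) * K) / m"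
      using Yb[OF s] K(1) m by (intro divide_right_mono mult_left_mono mult_right_mono) auto
    also have "\<dots> = (K / m^2) * norm v * \<bar>t - s\<bar>" by (simp add: power2_eq_square field_simps)
    finally show "dist (Y t *v v) (Y s *v v) \<le> (K / m^2) * norm v * dist t s"
      by (simp add: dist_norm dist_real_def)
  next
    show "0 \<le> K / m^2 * norm v" using K m by simp
  qed
  have cv: "continuous_on {0..1} (\<lambda>t. Y t *v v)" for v using lipschitz_on_continuous_on[OF lip] .
  have eq: "(\<lambda>t. hmean A t B) = (\<lambda>t. \<chi> i j. (Y t *v axis j 1) $ i)"
    by (simp add: fun_eq_iff vec_eq_iff mv_axis Y_def X_def hmean_def)
  show ?thesis unfolding eq
    by (intro continuous_on_vec_lambda continuous_on_component cv)
qed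

lemma integrable_hmean:
  fixes A B :: "'n::finite cmat"
  assumes acc: "accretive A" "accretive B" and rep: "represents \<nu> f"
  shows "integrable \<nu> (\<lambda>t. hmean A t B)"
proof -
  have pr: "prob_space \<nu>" and se: "sets \<nu> = sets (restrict_space borel {0..1::real})"
    using rep by (auto simp: represents_def)
  have sp: "space \<nu> = {0..1}" using sets_eq_imp_space_eq[OF se] by (simp add: space_restrict_space)
  have cont: "continuous_on {0..1} (\<lambda>t. hmean A t B)" using cont_hmean[OF acc] .
  have "(\<lambda>t. hmean A t B) \<in> borel_measurable (restrict_space borel {0..1})"
    using borel_measurable_continuous_on_restrict[OF cont] .
  then have meas: "(\<lambda>t. hmean A t B) \<in> borel_measurable \<nu>"
    using measurable_cong_sets[OF se refl] by blast
  have "bounded ((\<lambda>t. hmean A t B) ` {0..1})"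
    using compact_imp_bounded[OF compact_continuous_image[OF cont compact_Icc]] .
  then obtain Bd where Bd: "\<forall>t\<in>{0..1}. norm (hmean A t B) \<le> Bd" unfolding bounded_iff by auto
  have "AE t in \<nu>. norm (hmean A t B) \<le> Bd" using Bd sp by (intro AE_I2) auto
  then show ?thesis
    using finite_measure.integrable_const_bound[OF prob_space.finite_measure[OF pr] _ meas] by blast
qed

lemma bl_qform: "bounded_linear (\<lambda>M::'n::finite cmat. Re (qform M x))"
  unfolding linear_conv_bounded_linear[symmetric]
  by (intro linearI) (simp_all add: qform_add qform_scaleR)

lemma (in plm) bl: "bounded_linear \<Phi>"
  unfolding linear_conv_bounded_linear[symmetric]
  by (intro linearI) (simp_all add: add scaleR)

theorem mainTheorem12:
  fixes A B :: "'n::finite cmat" and \<Phi> :: "'n cmat \<Rightarrow> 'r::finite cmat"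
    and \<alpha> :: real and f :: "real \<Rightarrow> real" and \<nu> :: "real measure"
  assumes "accretive A" and "accretive B"
    and "0 \<le> \<alpha>" and "\<alpha> < pi/2"
    and "numrange A \<subseteq> sector \<alpha>" and "numrange B \<subseteq> sector \<alpha>"
    and "positive_linear_map \<Phi>" and "posdef (\<Phi> (mat 1))"
    and "\<forall>x>0. f x > 0" and "f 1 = 1"
    and "represents \<nu> f"
  shows "loewner_le (ReM (\<Phi> (opmean \<nu> A B)))
           ((1 / (cos \<alpha>)^2) *\<^sub>R ReM (opmean \<nu> (\<Phi> A) (\<Phi> B)))"
proof -
  interpret plm \<Phi> using assms(7,8) by (rule plm.intro)
  note acc = assms(1,2) and S = assms(5,6) and al = assms(3,4) and rep = assms(11)
  have aA: "accretive (\<Phi> A)" and aB: "accretive (\<Phi> B)" using accretive acc by auto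
  have pr: "prob_space \<nu>" and se: "sets \<nu> = sets (restrict_space borel {0..1::real})"
    using rep by (auto simp: represents_def)
  have sp: "space \<nu> = {0..1}" using sets_eq_imp_space_eq[OF se] by (simp add: space_restrict_space)
  define c where "c = 1 / (cos \<alpha>)^2"
  have fI: "integrable \<nu> (\<lambda>t. hmean A t B)" using integrable_hmean[OF acc rep] .
  have gI: "integrable \<nu> (\<lambda>t. hmean (\<Phi> A) t (\<Phi> B))" using integrable_hmean[OF aA aB rep] .
  have key: "Re (qform (ReM (\<Phi> (opmean \<nu> A B))) x) \<le> Re (qform (c *\<^sub>R ReM (opmean \<nu> (\<Phi> A) (\<Phi> B))) x)" for x
  proof -
    have blT: "bounded_linear (\<lambda>M. Re (qform (\<Phi> M) x))"
      using bounded_linear_compose[OF bl_qform bl] .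
    have "Re (qform (ReM (\<Phi> (opmean \<nu> A B))) x) = Re (qform (\<Phi> (opmean \<nu> A B)) x)"
      by (simp add: Re_qform_ReM)
    also have "\<dots> = (\<integral>t. Re (qform (\<Phi> (hmean A t B)) x) \<partial>\<nu>)"
      unfolding opmean_def using integral_bounded_linear[OF blT fI] by simp
    also have "\<dots> \<le> (\<integral>t. c * Re (qform (hmean (\<Phi> A) t (\<Phi> B)) x) \<partial>\<nu>)"
    proof (rule integral_mono)
      show "integrable \<nu> (\<lambda>t. Re (qform (\<Phi> (hmean A t B)) x))"
        using integrable_bounded_linear[OF blT fI] .
      show "integrable \<nu> (\<lambda>t. c * Re (qform (hmean (\<Phi> A) t (\<Phi> B)) x))"
        using integrable_bounded_linear[OF bl_qform gI] by (rule integrable_mult_right)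
      fix t assume "t \<in> space \<nu>"
      then have t: "0 \<le> t" "t \<le> 1" using sp by auto
      show "Re (qform (\<Phi> (hmean A t B)) x) \<le> c * Re (qform (hmean (\<Phi> A) t (\<Phi> B)) x)"
        using pointwise[OF acc S al t] by (simp add: c_def)
    qed
    also have "\<dots> = c * Re (qform (opmean \<nu> (\<Phi> A) (\<Phi> B)) x)"
      unfolding opmean_def using integral_bounded_linear[OF bl_qform gI] by simp
    also have "\<dots> = Re (qform (c *\<^sub>R ReM (opmean \<nu> (\<Phi> A) (\<Phi> B))) x)"
      by (simp add: qform_scaleR Re_qform_ReM)
    finally show ?thesis .
  qed
  have "psd (c *\<^sub>R ReM (opmean \<nu> (\<Phi> A) (\<Phi> B)) - ReM (\<Phi> (opmean \<nu> A B)))"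
    unfolding psd_def using key
    by (simp add: hermitian_diff hermitian_scaleR hermitian_ReM qform_diff)
  then show ?thesis by (simp add: loewner_le_def c_def)
qed

end
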